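(* Let $M := \langle X \mid R\rangle$ where $X$ is finite, and suppose that $M$ is normalizing, cancellative, and BF. Then $M$ has accepted elasticity.
   Context: For a set $X$, $\langle X\rangle$ is the free monoid on $X$ (identity $1$); $M=\langle X\mid R\rangle$ is the monoid presented by generators $X$ and relations $R\subseteq\langle X\rangle\times\langle X\rangle$. $|a|$ is word length; $a=_M b$ means equal images in $M$. $M$ is normalizing if $aM=Ma$ for all $a\in M$; cancellative if $ab=ac$ or $ba=ca$ implies $b=c$. $\mathsf{L}_M(a):=\{|b| : b\in\langle X\rangle,\ b=_M a\}$, $\mathcal{L}(M):=\{\mathsf{L}_M(a): a\in\langle X\rangle\}$; $M$ is BF if every $\mathsf{L}_M(a)$ is finite. For $L\subseteq\mathbb{N}$, $\rho(L):=\sup(L\cap\mathbb{N}^+)/\min(L\cap\mathbb{N}^+)$ if $L\cap\mathbb{N}^+\ne\emptyset$, and $\rho(L):=0$ otherwise; $\rho(M):=\sup\{\rho(L): L\in\mathcal{L}(M)\}$. $M$ has accepted elasticity if $\rho(M)=\rho(L)<\infty$ for some $L\in\mathcal{L}(M)$. *)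

theory Defs
  imports "HOL-Library.Extended_Real"
begin

text \<open>Words over the generators are lists; the free monoid on X is lists X.
  pres_eq R is the monoid congruence on words generated by the relations R,
  so that a =_M b iff pres_eq R a b.\<close>

inductive pres_eq :: "('a list \<times> 'a list) set \<Rightarrow> 'a list \<Rightarrow> 'a list \<Rightarrow> bool"
  for R where
  base: "(u, v) \<in> R \<Longrightarrow> pres_eq R (p @ u @ q) (p @ v @ q)"
| refl: "pres_eq R a a"
| sym: "pres_eq R a b \<Longrightarrow> pres_eq R b a"
| trans: "pres_eq R a b \<Longrightarrow> pres_eq R b c \<Longrightarrow> pres_eq R a c"

definition normalizing :: "'a set \<Rightarrow> ('a list \<times> 'a list) set \<Rightarrow> bool" where
  "normalizing X R \<longleftrightarrow>
     (\<forall>a\<in>lists X. \<forall>b\<in>lists X.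
        (\<exists>c\<in>lists X. pres_eq R (a @ b) (c @ a)) \<and>
        (\<exists>c\<in>lists X. pres_eq R (b @ a) (a @ c)))"

definition cancellative :: "'a set \<Rightarrow> ('a list \<times> 'a list) set \<Rightarrow> bool" where
  "cancellative X R \<longleftrightarrow>
     (\<forall>a\<in>lists X. \<forall>b\<in>lists X. \<forall>c\<in>lists X.
        (pres_eq R (a @ b) (a @ c) \<longrightarrow> pres_eq R b c) \<and>
        (pres_eq R (b @ a) (c @ a) \<longrightarrow> pres_eq R b c))"

definition length_set :: "'a set \<Rightarrow> ('a list \<times> 'a list) set \<Rightarrow> 'a list \<Rightarrow> nat set" where
  "length_set X R a = {length b | b. b \<in> lists X \<and> pres_eq R b a}"

definition length_sets :: "'a set \<Rightarrow> ('a list \<times> 'a list) set \<Rightarrow> nat set set" where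
  "length_sets X R = length_set X R ` lists X"

definition BF :: "'a set \<Rightarrow> ('a list \<times> 'a list) set \<Rightarrow> bool" where
  "BF X R \<longleftrightarrow> (\<forall>a\<in>lists X. finite (length_set X R a))"

definition rho_set :: "nat set \<Rightarrow> ereal" where
  "rho_set L = (if L \<inter> {0<..} = {} then 0
     else (SUP n\<in>L \<inter> {0<..}. ereal (real n)) / ereal (real (LEAST n. n \<in> L \<and> 0 < n)))"

definition elasticity :: "'a set \<Rightarrow> ('a list \<times> 'a list) set \<Rightarrow> ereal" where
  "elasticity X R = (SUP L\<in>length_sets X R. rho_set L)"

definition accepted_elasticity :: "'a set \<Rightarrow> ('a list \<times> 'a list) set \<Rightarrow> bool" where
  "accepted_elasticity X R \<longleftrightarrow>
     (\<exists>L\<in>length_sets X R. elasticity X R = rho_set L \<and> rho_set L < \<infinity>)"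

end

theory Submission
  imports Defs "HOL-Library.Sublist" "HOL-Library.Infinite_Set"
begin


definition goodseq :: "(nat \<Rightarrow> 'b list) \<Rightarrow> bool" where
  "goodseq f \<longleftrightarrow> (\<exists>i j. i < j \<and> subseq (f i) (f j))"

definition ext_ok :: "'b set \<Rightarrow> 'b list list \<Rightarrow> bool" where
  "ext_ok A ws \<longleftrightarrow> (\<exists>g. (\<forall>i. set (g i) \<subseteq> A) \<and> \<not> goodseq g \<and> (\<forall>i<length ws. g i = ws ! i))"

fun mbs :: "'b set \<Rightarrow> nat \<Rightarrow> 'b list list" where
  "mbs A 0 = []"
| "mbs A (Suc n) = mbs A n @ [arg_min length (\<lambda>w. ext_ok A (mbs A n @ [w]))]"

lemma mbs_length: "length (mbs A n) = n"
  by (induction n) auto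

lemma mbs_ext:
  assumes "ext_ok A []"
  shows "ext_ok A (mbs A n)"
proof (induction n)
  case 0 then show ?case using assms by simp
next
  case (Suc n)
  then obtain g where g: "\<forall>i. set (g i) \<subseteq> A" "\<not> goodseq g" "\<forall>i<length (mbs A n). g i = mbs A n ! i"
    unfolding ext_ok_def by blast
  have "ext_ok A (mbs A n @ [g n])"
    unfolding ext_ok_def using g mbs_length[of A n]
    by (intro exI[of _ g]) (auto simp: nth_append less_Suc_eq)
  then show ?case using arg_min_nat_lemma[of "\<lambda>w. ext_ok A (mbs A n @ [w])" "g n" length] by simp
qed

lemma mbs_min:
  assumes "ext_ok A []" "ext_ok A (mbs A n @ [w])"
  shows "length (mbs A (Suc n) ! n) \<le> length w"
  using arg_min_nat_lemma[of "\<lambda>w. ext_ok A (mbs A n @ [w])" w length] assms mbs_length[of A n]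
  by (simp add: nth_append)

lemma mbs_prefix: "n \<le> k \<Longrightarrow> take n (mbs A k) = mbs A n"
proof (induction k)
  case 0 then show ?case by simp
next
  case (Suc k)
  show ?case
  proof (cases "n = Suc k")
    case True then show ?thesis using mbs_length[of A "Suc k"] by simp
  next
    case False
    then have "n \<le> k" using Suc.prems by simp
    then show ?thesis using Suc.IH mbs_length[of A k] by simp
  qed
qed

lemma mbs_nth: "i < n \<Longrightarrow> mbs A n ! i = mbs A (Suc i) ! i"
proof -
  assume "i < n"
  have "mbs A (Suc i) = take (Suc i) (mbs A n)" using mbs_prefix[of "Suc i" n A] \<open>i<n\<close> by simp
  then show ?thesis using \<open>i < n\<close> by simp
qed

theorem higman:
  assumes fin: "finite A" and f: "\<forall>i. set (f i) \<subseteq> A"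
  shows "goodseq f"
proof (rule ccontr)
  assume bad: "\<not> goodseq f"
  have e0: "ext_ok A []" unfolding ext_ok_def using f bad by auto
  define m where "m i = mbs A (Suc i) ! i" for i
  have mext: "ext_ok A (mbs A n)" for n using mbs_ext[OF e0] .
  have mnth: "i < n \<Longrightarrow> mbs A n ! i = m i" for i n using mbs_nth m_def by metis
  have mA: "set (m i) \<subseteq> A" for i
  proof -
    obtain g where g: "\<forall>i. set (g i) \<subseteq> A" "\<forall>j<length (mbs A (Suc i)). g j = mbs A (Suc i) ! j"
      using mext[of "Suc i"] unfolding ext_ok_def by blast
    then have "g i = m i" using mbs_length[of A "Suc i"] m_def by simp
    then show ?thesis using g(1) by metis
  qed
  have mbad: "\<not> subseq (m i) (m j)" if "i < j" for i j
  proof -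
    obtain g where g: "\<not> goodseq g" "\<forall>k<length (mbs A (Suc j)). g k = mbs A (Suc j) ! k"
      using mext[of "Suc j"] unfolding ext_ok_def by blast
    have l: "length (mbs A (Suc j)) = Suc j" by (rule mbs_length)
    have "g i = m i" using g(2) l mnth[of i "Suc j"] that by simp
    moreover have "g j = m j" using g(2) l mnth[of j "Suc j"] by simp
    ultimately show ?thesis using g(1) that unfolding goodseq_def by metis
  qed
  have mne: "m i \<noteq> []" for i using mbad[of i "Suc i"] by auto
  have "finite ((\<lambda>i. hd (m i)) ` UNIV)"
    using mA mne by (intro finite_subset[OF _ fin]) (auto intro: hd_in_set)
  then obtain i0 where "infinite {i. hd (m i) = hd (m i0)}"
    using pigeonhole_infinite[of "UNIV :: nat set" "\<lambda>i. hd (m i)"] by auto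
  then obtain a where S: "infinite {i. hd (m i) = a}" by blast
  define S where "S = {i. hd (m i) = a}"
  define e where "e = enumerate S"
  have eS: "hd (m (e k)) = a" for k using enumerate_in_set[of S k] S unfolding S_def e_def by auto
  have emono: "k < l \<Longrightarrow> e k < e l" for k l using S unfolding S_def e_def by simp
  have ege: "k \<le> e k" for k
  proof (induction k)
    case (Suc k) then show ?case using emono[of k "Suc k"] by simp
  qed simp
  define g where "g i = (if i < e 0 then m i else tl (m (e (i - e 0))))" for i
  have gA: "\<forall>i. set (g i) \<subseteq> A" unfolding g_def using mA by (auto dest: set_mono_suffix[OF suffix_tl, THEN subsetD])
  have ghd: "m (e k) = a # tl (m (e k))" for k using eS[of k] mne[of "e k"] by (cases "m (e k)") auto
  have gbad: "\<not> goodseq g"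
  proof
    assume "goodseq g"
    then obtain i j where ij: "i < j" "subseq (g i) (g j)" unfolding goodseq_def by blast
    show False
    proof (cases "j < e 0")
      case True then show ?thesis using ij mbad unfolding g_def by auto
    next
      case jF: False
      show ?thesis
      proof (cases "i < e 0")
        case True
        then have "subseq (m i) (tl (m (e (j - e 0))))" using ij jF unfolding g_def by auto
        then have "subseq (m i) (m (e (j - e 0)))" using ghd[of "j - e 0"]
          by (metis list_emb_Cons)
        moreover have "i < e (j - e 0)"
          using True ege[of "j - e 0"] emono[of 0 "j - e 0"] jF ij by (cases "j - e 0 = 0") auto
        ultimately show ?thesis using mbad by blast
      next
        case False
        then have "subseq (tl (m (e (i - e 0)))) (tl (m (e (j - e 0))))" using ij jF unfolding g_def by auto
        then have "subseq (m (e (i - e 0))) (m (e (j - e 0)))"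
          using ghd[of "i - e 0"] ghd[of "j - e 0"] by (metis subseq_Cons2)
        moreover have "e (i - e 0) < e (j - e 0)" using emono False ij by simp
        ultimately show ?thesis using mbad by blast
      qed
    qed
  qed
  have "ext_ok A (mbs A (e 0) @ [tl (m (e 0))])"
    unfolding ext_ok_def
  proof (intro exI[of _ g] conjI gA gbad allI impI)
    fix i assume "i < length (mbs A (e 0) @ [tl (m (e 0))])"
    then have "i \<le> e 0" using mbs_length[of A "e 0"] by simp
    then show "g i = (mbs A (e 0) @ [tl (m (e 0))]) ! i"
      using mnth[of i "e 0"] mbs_length[of A "e 0"] unfolding g_def
      by (cases "i = e 0") (auto simp: nth_append)
  qed
  then have "length (m (e 0)) \<le> length (tl (m (e 0)))"
    using mbs_min[OF e0] m_def by metis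
  then show False using mne[of "e 0"] by (cases "m (e 0)") auto
qed



lemma pres_eq_cong: "pres_eq R a b \<Longrightarrow> pres_eq R (p @ a @ q) (p @ b @ q)"
proof (induction rule: pres_eq.induct)
  case (base u v p' q')
  then show ?case using pres_eq.base[of u v R "p @ p'" "q' @ q"] by simp
next
  case (refl a) then show ?case by (rule pres_eq.refl)
next
  case (sym a b) then show ?case by (metis pres_eq.sym)
next
  case (trans a b c) then show ?case by (metis pres_eq.trans)
qed

declare pres_eq.trans[trans]

lemma pres_eq_app: "pres_eq R a b \<Longrightarrow> pres_eq R c d \<Longrightarrow> pres_eq R (a @ c) (b @ d)"
  using pres_eq_cong[of R a b "[]" c] pres_eq_cong[of R c d b "[]"]
  by (auto intro: pres_eq.trans)

lemma pres_eq_appl: "pres_eq R a b \<Longrightarrow> pres_eq R (p @ a) (p @ b)"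
  using pres_eq_cong[of R a b p "[]"] by simp

lemma pres_eq_appr: "pres_eq R a b \<Longrightarrow> pres_eq R (a @ q) (b @ q)"
  using pres_eq_cong[of R a b "[]" q] by simp

locale PM =
  fixes X :: "'a set" and R :: "('a list \<times> 'a list) set"
  assumes fin: "finite X"
    and norm: "normalizing X R"
    and canc: "cancellative X R"
    and bf: "BF X R"
begin

abbreviation eq where "eq \<equiv> pres_eq R"

lemma esym: "eq a b \<Longrightarrow> eq b a" by (rule pres_eq.sym)
lemma etrans: "eq a b \<Longrightarrow> eq b c \<Longrightarrow> eq a c" by (rule pres_eq.trans)
lemma erefl: "eq a a" by (rule pres_eq.refl)

lemma norm1: "a \<in> lists X \<Longrightarrow> b \<in> lists X \<Longrightarrow> \<exists>c\<in>lists X. eq (a @ b) (c @ a)"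
  using norm unfolding normalizing_def by blast
lemma norm2: "a \<in> lists X \<Longrightarrow> b \<in> lists X \<Longrightarrow> \<exists>c\<in>lists X. eq (b @ a) (a @ c)"
  using norm unfolding normalizing_def by blast
lemma cancl: "a \<in> lists X \<Longrightarrow> b \<in> lists X \<Longrightarrow> c \<in> lists X \<Longrightarrow> eq (a @ b) (a @ c) \<Longrightarrow> eq b c"
  using canc unfolding cancellative_def by blast
lemma cancr: "a \<in> lists X \<Longrightarrow> b \<in> lists X \<Longrightarrow> c \<in> lists X \<Longrightarrow> eq (b @ a) (c @ a) \<Longrightarrow> eq b c"
  using canc unfolding cancellative_def by blast

lemma bf1: assumes "w \<in> lists X" "eq w []" shows "w = []"
proof (rule ccontr)
  assume ne: "w \<noteq> []"
  have rep: "eq (concat (replicate k w)) []" for k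
  proof (induction k)
    case 0 then show ?case by (simp add: erefl)
  next
    case (Suc k) then show ?case using pres_eq_app[OF assms(2) Suc] by simp
  qed
  have "(\<lambda>k. k * length w) ` UNIV \<subseteq> length_set X R []"
    unfolding length_set_def using rep assms(1)
    by (auto intro!: exI[of _ "concat (replicate _ w)"] simp: length_concat sum_list_replicate)
  moreover have "infinite ((\<lambda>k. k * length w) ` UNIV)"
    using ne by (intro range_inj_infinite) (auto simp: inj_def)
  ultimately have "infinite (length_set X R [])" using finite_subset by blast
  then show False using bf unfolding BF_def by auto
qed

definition atom where "atom x \<longleftrightarrow> x \<in> X \<and> (\<forall>w\<in>lists X. eq w [x] \<longrightarrow> length w = 1)"

lemma atomdec: assumes "a \<in> lists X" shows "\<exists>a'\<in>lists (Collect atom). eq a' a"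
proof -
  let ?S = "length_set X R a"
  have finS: "finite ?S" using bf assms unfolding BF_def by auto
  have "length a \<in> ?S" unfolding length_set_def using assms erefl by auto
  then have "Max ?S \<in> ?S" using finS by (intro Max_in) auto
  then obtain w where w: "w \<in> lists X" "eq w a" "length w = Max ?S" unfolding length_set_def by force
  have "w \<in> lists (Collect atom)"
  proof (rule ccontr)
    assume "w \<notin> lists (Collect atom)"
    then obtain i where i: "i < length w" "\<not> atom (w ! i)" by (metis in_lists_conv_set in_set_conv_nth mem_Collect_eq)
    have wiX: "w ! i \<in> X" using w(1) i(1) by auto
    then obtain z where z: "z \<in> lists X" "eq z [w ! i]" "length z \<noteq> 1" using i(2) unfolding atom_def by auto
    have "z \<noteq> []" using bf1[of "[w ! i]"] z(2) wiX esym by auto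
    then have "length z \<noteq> 0" by simp
    then have zl: "length z \<ge> 2" using z(3) by linarith
    have wdec: "w = take i w @ [w ! i] @ drop (Suc i) w" using i(1) by (simp add: id_take_nth_drop)
    define w' where "w' = take i w @ z @ drop (Suc i) w"
    have "eq w' w" unfolding w'_def using pres_eq_cong[OF z(2)] wdec by metis
    then have "eq w' a" using w(2) etrans by blast
    moreover have "w' \<in> lists X" unfolding w'_def using w(1) z(1)
      by (auto dest: in_set_takeD in_set_dropD)
    ultimately have "length w' \<in> ?S" unfolding length_set_def by auto
    then have "length w' \<le> length w" using w(3) finS by simp
    moreover have "length w' = length w + length z - 1" unfolding w'_def using i(1) by simp
    ultimately show False using zl by simp
  qed
  then show ?thesis using w(2) by blast
qed

definition lab :: "'a list \<Rightarrow> ('a \<times> 'a) set" where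
  "lab p = {(x, z). x \<in> X \<and> z \<in> X \<and> eq (x # p) (p @ [z])}"

lemma lab_sub: "lab p \<subseteq> X \<times> X" unfolding lab_def by auto

lemma lab_cong: "eq p p' \<Longrightarrow> lab p = lab p'"
proof -
  assume e: "eq p p'"
  have *: "eq (x # p) (p @ [z]) \<longleftrightarrow> eq (x # p') (p' @ [z])" for x z
  proof -
    have a: "eq (x # p) (x # p')" using pres_eq_appl[OF e, of "[x]"] by simp
    have b: "eq (p @ [z]) (p' @ [z])" using pres_eq_appr[OF e] .
    show ?thesis using a b esym etrans by meson
  qed
  show ?thesis unfolding lab_def using * by auto
qed

lemma L1a: assumes "atom x" "p \<in> lists X" shows "\<exists>z\<in>X. eq (x # p) (p @ [z])"
proof -
  have xX: "x \<in> X" using assms(1) atom_def by auto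
  obtain c where c: "c \<in> lists X" "eq ([x] @ p) (p @ c)" using norm2[OF assms(2), of "[x]"] xX by auto
  show ?thesis
  proof (cases c)
    case Nil
    then have "eq ([x] @ p) ([] @ p)" using c by simp
    then have "eq [x] []" using cancr[OF assms(2), of "[x]" "[]"] xX by simp
    then show ?thesis using bf1[of "[x]"] xX by simp
  next
    case (Cons c1 cs)
    show ?thesis
    proof (cases cs)
      case Nil then show ?thesis using c Cons by auto
    next
      case (Cons c2 cs')
      have c1X: "[c1] \<in> lists X" and csX: "cs \<in> lists X" using c(1) \<open>c = c1 # cs\<close> by auto
      obtain d1 where d1: "d1 \<in> lists X" "eq (p @ [c1]) (d1 @ p)" using norm1[OF assms(2) c1X] by auto
      obtain d2 where d2: "d2 \<in> lists X" "eq (p @ cs) (d2 @ p)" using norm1[OF assms(2) csX] by auto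
      have "d1 \<noteq> []"
      proof
        assume "d1 = []"
        then have "eq (p @ [c1]) (p @ [])" using d1 by simp
        then have "eq [c1] []" using cancl[OF assms(2) c1X] by simp
        then show False using bf1[OF c1X] by simp
      qed
      have "d2 \<noteq> []"
      proof
        assume "d2 = []"
        then have "eq (p @ cs) (p @ [])" using d2 by simp
        then have "eq cs []" using cancl[OF assms(2) csX] by simp
        then show False using bf1[OF csX] \<open>cs = c2 # cs'\<close> by simp
      qed
      have "eq (p @ c) (d1 @ p @ cs)" using pres_eq_appr[OF d1(2), of cs] \<open>c = c1 # cs\<close> by simp
      also have "eq (d1 @ p @ cs) (d1 @ d2 @ p)" using pres_eq_appl[OF d2(2), of d1] by simp
      finally have "eq ([x] @ p) ((d1 @ d2) @ p)" using c(2) etrans by simp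
      then have "eq [x] (d1 @ d2)" using cancr[OF assms(2), of "[x]" "d1 @ d2"] xX d1(1) d2(1) by simp
      then have e2: "eq (d1 @ d2) [x]" by (rule esym)
      have "d1 @ d2 \<in> lists X" using d1(1) d2(1) by simp
      then have "length (d1 @ d2) = 1" using assms(1) e2 unfolding atom_def by blast
      then show ?thesis using \<open>d1 \<noteq> []\<close> \<open>d2 \<noteq> []\<close> by (cases d1; cases d2) auto
    qed
  qed
qed

lemma L1b:
  assumes "p \<in> lists X" "q \<in> lists X" "lab p = lab q"
  shows "a \<in> lists (Collect atom) \<Longrightarrow> \<exists>z\<in>lists X. eq (a @ p) (p @ z) \<and> eq (a @ q) (q @ z)"
proof (induction a)
  case Nil then show ?case using erefl by (intro bexI[of _ "[]"]) auto
next
  case (Cons x a)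
  then obtain z where z: "z \<in> lists X" "eq (a @ p) (p @ z)" "eq (a @ q) (q @ z)" by auto
  have ax: "atom x" using Cons.prems by simp
  obtain z1 where z1: "z1 \<in> X" "eq (x # p) (p @ [z1])" using L1a[OF ax assms(1)] by auto
  have xX: "x \<in> X" using Cons.prems atom_def by auto
  have "(x, z1) \<in> lab q" using assms(3) z1 xX unfolding lab_def by auto
  then have z1q: "eq (x # q) (q @ [z1])" unfolding lab_def by auto
  have A: "eq ((x # a) @ p) (p @ z1 # z)"
  proof -
    have "eq ((x # a) @ p) (x # p @ z)" using pres_eq_appl[OF z(2), of "[x]"] by simp
    also have "eq (x # p @ z) (p @ z1 # z)" using pres_eq_appr[OF z1(2), of z] by simp
    finally show ?thesis .
  qed
  have B: "eq ((x # a) @ q) (q @ z1 # z)"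
  proof -
    have "eq ((x # a) @ q) (x # q @ z)" using pres_eq_appl[OF z(3), of "[x]"] by simp
    also have "eq (x # q @ z) (q @ z1 # z)" using pres_eq_appr[OF z1q, of z] by simp
    finally show ?thesis .
  qed
  show ?case using A B z(1) z1(1) by (intro bexI[of _ "z1 # z"]) auto
qed

lemma L1:
  assumes "p \<in> lists X" "q \<in> lists X" "lab p = lab q" "w \<in> lists X" "w' \<in> lists X"
    "eq (w @ p) (p @ w')"
  shows "eq (w @ q) (q @ w')"
proof -
  obtain a where a: "a \<in> lists (Collect atom)" "eq a w" using atomdec[OF assms(4)] by auto
  obtain z where z: "z \<in> lists X" "eq (a @ p) (p @ z)" "eq (a @ q) (q @ z)"
    using L1b[OF assms(1-3) a(1)] by auto
  have "eq (p @ w') (p @ z)"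
    using esym[OF assms(6)] pres_eq_appr[OF a(2), of p] z(2) esym etrans by meson
  then have "eq w' z" using cancl[OF assms(1) assms(5) z(1)] by simp
  have "eq (w @ q) (a @ q)" using pres_eq_appr[OF esym[OF a(2)]] .
  also have "eq (a @ q) (q @ z)" by (rule z(3))
  also have "eq (q @ z) (q @ w')" using pres_eq_appl[OF esym[OF \<open>eq w' z\<close>]] .
  finally show ?thesis .
qed

lemma L3:
  assumes "p \<in> lists X" "q \<in> lists X" "lab p = lab q" "y \<in> X"
  shows "lab (p @ [y]) = lab (q @ [y])"
proof -
  have *: "eq (x # p @ [y]) (p @ [y] @ [z]) \<Longrightarrow> eq (x # q @ [y]) (q @ [y] @ [z])"
    if H: "p \<in> lists X" "q \<in> lists X" "lab p = lab q" "x \<in> X" "z \<in> X" for p q x z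
  proof -
    assume h: "eq (x # p @ [y]) (p @ [y] @ [z])"
    obtain c where c: "c \<in> lists X" "eq ([x] @ p) (p @ c)" using norm2[OF H(1), of "[x]"] H(4) by auto
    have cq: "eq ([x] @ q) (q @ c)" using L1[OF H(1-3) _ c(1) c(2)] H(4) by simp
    have "eq (p @ c @ [y]) (x # p @ [y])" using esym[OF pres_eq_appr[OF c(2), of "[y]"]] by simp
    then have "eq (p @ c @ [y]) (p @ [y] @ [z])" using h etrans by blast
    then have "eq (c @ [y]) ([y] @ [z])" using cancl[OF H(1)] c(1) assms(4) H(5) by simp
    then have "eq (q @ c @ [y]) (q @ [y] @ [z])" using pres_eq_appl by blast
    moreover have "eq (x # q @ [y]) (q @ c @ [y])" using pres_eq_appr[OF cq, of "[y]"] by simp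
    ultimately show ?thesis using etrans by blast
  qed
  show ?thesis unfolding lab_def using *[OF assms(1-3)] *[OF assms(2,1) assms(3)[symmetric]] by auto
qed

lemma L4:
  assumes "q \<in> lists X" "s \<in> lists X" "lab q = lab (q @ s)" "w \<in> lists X"
  shows "eq (s @ w) (w @ s)"
proof -
  have qs: "q @ s \<in> lists X" using assms by auto
  obtain c where c: "c \<in> lists X" "eq (q @ w) (c @ q)" using norm1[OF assms(1) assms(4)] by auto
  have "eq (c @ q @ s) (q @ s @ w)" using L1[OF assms(1) qs assms(3) c(1) assms(4) esym[OF c(2)]] by simp
  moreover have "eq (c @ q @ s) (q @ w @ s)" using pres_eq_appr[OF esym[OF c(2)], of s] by simp
  ultimately have "eq (q @ s @ w) (q @ w @ s)" using esym etrans by blast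
  then show ?thesis using cancl[OF assms(1)] assms by auto
qed

fun labf :: "'a list \<Rightarrow> 'a list \<Rightarrow> ('a \<times> ('a \<times> 'a) set) list" where
  "labf p [] = []"
| "labf p (y # u) = (y, lab p) # labf (p @ [y]) u"

lemma labf_cong: "eq p p' \<Longrightarrow> labf p u = labf p' u"
proof (induction u arbitrary: p p')
  case (Cons y u)
  then show ?case using Cons.IH[OF pres_eq_appr[OF Cons.prems]] lab_cong[OF Cons.prems] by simp
qed simp

lemma labf_length: "length (labf p u) = length u"
  by (induction u arbitrary: p) auto

lemma labf_fst: "map fst (labf p u) = u"
  by (induction u arbitrary: p) auto

lemma labf_set: "u \<in> lists X \<Longrightarrow> set (labf p u) \<subseteq> X \<times> Pow (X \<times> X)"
  by (induction u arbitrary: p) (auto simp: lab_def)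

lemma K:
  shows "p \<in> lists X \<Longrightarrow> q \<in> lists X \<Longrightarrow> s \<in> lists X \<Longrightarrow> u \<in> lists X \<Longrightarrow> lab p = lab q \<Longrightarrow>
    subseq (labf p u) (labf (q @ s) u') \<Longrightarrow> u' \<in> lists X \<Longrightarrow>
    \<exists>t\<in>lists X. eq (s @ u') (u @ t) \<and> length t = length s + length u' - length u"
proof (induction u' arbitrary: p q s u)
  case Nil
  then have "length (labf p u) = 0" using list_emb_length[OF Nil(6)] by simp
  then have "u = []" using labf_length[of p u] by simp
  then show ?case using erefl Nil(3) by (intro bexI[of _ s]) auto
next
  case (Cons y u'')
  note P = Cons.prems
  have yX: "y \<in> X" and u''X: "u'' \<in> lists X" using P(7) by auto
  show ?case
  proof (cases u)
    case Nil
    have "s @ y # u'' \<in> lists X" using P(3) yX u''X by simp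
    then show ?thesis using erefl Nil by (intro bexI[of _ "s @ y # u''"]) simp_all
  next
    case (Cons u1 u0)
    have u0X: "u0 \<in> lists X" and u1X: "u1 \<in> X" using P(4) Cons by auto
    have sub: "subseq ((u1, lab p) # labf (p @ [u1]) u0) ((y, lab (q @ s)) # labf (q @ s @ [y]) u'')"
      using P(6) Cons by simp
    show ?thesis
    proof (cases "(u1, lab p) = (y, lab (q @ s))")
      case False
      then have "subseq (labf p u) (labf (q @ (s @ [y])) u'')" using sub Cons by simp
      moreover have "s @ [y] \<in> lists X" using P(3) yX by simp
      ultimately obtain t where t: "t \<in> lists X" "eq ((s @ [y]) @ u'') (u @ t)"
          "length t = length (s @ [y]) + length u'' - length u"
        using Cons.IH[OF P(1) P(2) _ P(4) P(5) _ u''X] by blast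
      show ?thesis using t by (intro bexI[of _ t]) simp_all
    next
      case True
      then have u1: "u1 = y" and lp: "lab p = lab (q @ s)" by auto
      have sub2: "subseq (labf (p @ [y]) u0) (labf (q @ s @ [y]) u'')" using sub True by simp
      have cen: "eq (s @ [y]) ([y] @ s)"
        using L4[OF P(2) P(3) _ , of "[y]"] P(5) lp yX by simp
      have "eq (q @ s @ [y]) ((q @ [y]) @ s)" using pres_eq_appl[OF cen, of q] by simp
      then have "labf (q @ s @ [y]) u'' = labf ((q @ [y]) @ s) u''" by (rule labf_cong)
      then have sub3: "subseq (labf (p @ [y]) u0) (labf ((q @ [y]) @ s) u'')" using sub2 by simp
      have lpy: "lab (p @ [y]) = lab (q @ [y])" using L3[OF P(1) P(2) P(5) yX] .
      have pyX: "p @ [y] \<in> lists X" and qyX: "q @ [y] \<in> lists X" using P(1) P(2) yX by auto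
      obtain t where t: "t \<in> lists X" "eq (s @ u'') (u0 @ t)" "length t = length s + length u'' - length u0"
        using Cons.IH[OF pyX qyX P(3) u0X lpy sub3 u''X] by blast
      have "eq (s @ y # u'') (y # s @ u'')" using pres_eq_appr[OF cen, of u''] by simp
      also have "eq (y # s @ u'') (y # u0 @ t)" using pres_eq_appl[OF t(2), of "[y]"] by simp
      finally have "eq (s @ y # u'') (u @ t)" using Cons u1 by simp
      moreover have "length t = length s + length (y # u'') - length u" using t(3) Cons by simp
      ultimately show ?thesis using t(1) by blast
    qed
  qed
qed

end


context PM
begin

definition PS where "PS = {(u, v). u \<in> lists X \<and> v \<in> lists X \<and> eq u v \<and> u \<noteq> []}"

definition ple where "ple a b \<longleftrightarrow> subseq (labf [] (fst a)) (labf [] (fst b)) \<and> subseq (labf [] (snd a)) (labf [] (snd b))"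

definition MN where "MN = {a \<in> PS. \<forall>b\<in>PS. ple b a \<longrightarrow> b = a}"

definition ratio :: "'a list \<times> 'a list \<Rightarrow> real" where
  "ratio a = real (length (snd a)) / real (length (fst a))"

definition enc :: "'a list \<times> 'a list \<Rightarrow> (bool \<times> 'a \<times> ('a \<times> 'a) set) list" where
  "enc a = map (Pair True) (labf [] (fst a)) @ map (Pair False) (labf [] (snd a))"

lemma enc_ple: "subseq (enc a) (enc b) \<Longrightarrow> ple a b"
proof -
  assume h: "subseq (enc a) (enc b)"
  have f1: "map snd (filter fst (enc c)) = labf [] (fst c)" for c
    unfolding enc_def by (simp add: filter_map comp_def)
  have f2: "map snd (filter (\<lambda>x. \<not> fst x) (enc c)) = labf [] (snd c)" for c
    unfolding enc_def by (simp add: filter_map comp_def)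
  show ?thesis unfolding ple_def
    using subseq_map[OF subseq_filter[OF h, of fst], of snd]
      subseq_map[OF subseq_filter[OF h, of "\<lambda>x. \<not> fst x"], of snd]
    unfolding f1 f2 by simp
qed

lemma enc_set: "a \<in> PS \<Longrightarrow> set (enc a) \<subseteq> UNIV \<times> X \<times> Pow (X \<times> X)"
proof -
  assume "a \<in> PS"
  then have "fst a \<in> lists X" "snd a \<in> lists X" unfolding PS_def by auto
  then have "set (labf [] (fst a)) \<subseteq> X \<times> Pow (X \<times> X)" "set (labf [] (snd a)) \<subseteq> X \<times> Pow (X \<times> X)"
    using labf_set by blast+
  then show ?thesis unfolding enc_def by auto
qed

lemma labf_inj: "labf p u = labf p' u' \<Longrightarrow> u = u'"
proof -
  assume "labf p u = labf p' u'"
  then have "map fst (labf p u) = map fst (labf p' u')" by simp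
  then show ?thesis by (simp only: labf_fst)
qed

lemma ple_eq: "ple a b \<Longrightarrow> length (fst a) = length (fst b) \<Longrightarrow> length (snd a) = length (snd b) \<Longrightarrow> a = b"
proof -
  assume h: "ple a b" "length (fst a) = length (fst b)" "length (snd a) = length (snd b)"
  have "labf [] (fst a) = labf [] (fst b)"
    using h(1) unfolding ple_def by (intro subseq_same_length) (simp_all add: labf_length h(2))
  then have 1: "fst a = fst b" by (rule labf_inj)
  have "labf [] (snd a) = labf [] (snd b)"
    using h(1) unfolding ple_def by (intro subseq_same_length) (simp_all add: labf_length h(3))
  then have 2: "snd a = snd b" by (rule labf_inj)
  show ?thesis using 1 2 by (rule prod_eqI)
qed

lemma MN_finite: "finite MN"
proof (rule ccontr)
  assume "infinite MN"
  then obtain f :: "nat \<Rightarrow> _" where f: "inj f" "range f \<subseteq> MN"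
    unfolding infinite_iff_countable_subset by blast
  have finA: "finite (UNIV \<times> X \<times> Pow (X \<times> X) :: (bool \<times> 'a \<times> ('a \<times> 'a) set) set)"
    using fin by simp
  have fP: "f i \<in> PS" for i using f(2) unfolding MN_def by blast
  have fM: "f i \<in> MN" for i using f(2) by blast
  have "\<forall>i. set ((enc \<circ> f) i) \<subseteq> UNIV \<times> X \<times> Pow (X \<times> X)"
    using enc_set[OF fP] by simp
  then have "goodseq (enc \<circ> f)" by (rule higman[OF finA])
  then obtain i j where ij: "i < j" "subseq (enc (f i)) (enc (f j))" unfolding goodseq_def by auto
  then have "ple (f i) (f j)" by (intro enc_ple) 
  then have "f i = f j" using fM[of j] fP[of i] unfolding MN_def by blast
  then have "i = j" using f(1) unfolding inj_def by blast
  then show False using ij(1) by simp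
qed

lemma PS_snd_ne: "a \<in> PS \<Longrightarrow> snd a \<noteq> []"
proof
  assume "a \<in> PS" "snd a = []"
  then have "fst a \<in> lists X" "eq (fst a) []" "fst a \<noteq> []" unfolding PS_def by auto
  then show False using bf1 by blast
qed

lemma mediant:
  fixes a b c d r :: real
  assumes "b > 0" "d > 0" "a / b \<le> r" "c / d \<le> r"
  shows "(a + c) / (b + d) \<le> r"
proof -
  have "a \<le> r * b" "c \<le> r * d" using assms by (auto simp: divide_le_eq)
  then have "a + c \<le> r * (b + d)" by (simp add: algebra_simps)
  then show ?thesis using assms by (simp add: divide_le_eq)
qed

lemma lemA: "a \<in> PS \<Longrightarrow> \<exists>b\<in>MN. ratio a \<le> ratio b"
proof (induction "length (fst a) + length (snd a)" arbitrary: a rule: less_induct)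
  case less
  obtain u' v' where a: "a = (u', v')" by force
  show ?case
  proof (cases "a \<in> MN")
    case True then show ?thesis by auto
  next
    case False
    then obtain b where b: "b \<in> PS" "ple b a" "b \<noteq> a" using less.prems unfolding MN_def by auto
    obtain u v where bd: "b = (u, v)" by force
    have uX: "u \<in> lists X" "v \<in> lists X" "eq u v" "u \<noteq> []" using b(1) bd PS_def by auto
    have uX': "u' \<in> lists X" "v' \<in> lists X" "eq u' v'" "u' \<noteq> []" using less.prems a PS_def by auto
    have s1: "subseq (labf [] u) (labf ([] @ []) u')" and s2: "subseq (labf [] v) (labf ([] @ []) v')"
      using b(2) a bd ple_def by auto
    obtain t where t: "t \<in> lists X" "eq ([] @ u') (u @ t)" "length t = length [] + length u' - length u"
      using K[OF _ _ _ uX(1) _ s1 uX'(1)] by auto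
    obtain t' where t': "t' \<in> lists X" "eq ([] @ v') (v @ t')" "length t' = length [] + length v' - length v"
      using K[OF _ _ _ uX(2) _ s2 uX'(2)] by auto
    have "length (labf [] u) \<le> length (labf ([] @ []) u')" by (rule list_emb_length[OF s1])
    moreover have "length (labf [] v) \<le> length (labf ([] @ []) v')" by (rule list_emb_length[OF s2])
    ultimately have lu: "length u \<le> length u'" "length v \<le> length v'" by (simp_all add: labf_length)
    have e1: "eq (u @ t) u'" using esym[OF t(2)] by simp
    have e2: "eq v' (v @ t')" using t'(2) by simp
    have "eq (u @ t) (v @ t')" using etrans[OF etrans[OF e1 uX'(3)] e2] .
    moreover have "eq (v @ t') (u @ t')" using pres_eq_appr[OF esym[OF uX(3)]] .
    ultimately have "eq (u @ t) (u @ t')" by (rule etrans)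
    then have tt: "eq t t'" by (rule cancl[OF uX(1) t(1) t'(1)])
    have tne: "t \<noteq> []"
    proof
      assume "t = []"
      then have "t' = []" using bf1[OF t'(1)] esym[OF tt] by simp
      then have "b = a" using ple_eq[OF b(2)] \<open>t = []\<close> t(3) t'(3) lu a bd by simp
      then show False using b(3) by simp
    qed
    have tP: "(t, t') \<in> PS" using t(1) t'(1) tt tne PS_def by auto
    have vne: "v \<noteq> []" using PS_snd_ne[OF b(1)] bd by simp
    have "length (fst b) + length (snd b) < length (fst a) + length (snd a)"
    proof -
      have "length u + length v \<noteq> length u' + length v'"
        using ple_eq[OF b(2)] b(3) lu a bd by auto
      then show ?thesis using lu a bd by simp
    qed
    then obtain m1 where m1: "m1 \<in> MN" "ratio b \<le> ratio m1" using less.hyps[OF _ b(1)] by blast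
    have "length (fst (t, t')) + length (snd (t, t')) < length (fst a) + length (snd a)"
      using t(3) t'(3) lu a uX(4) by (cases u) auto
    then obtain m2 where m2: "m2 \<in> MN" "ratio (t, t') \<le> ratio m2" using less.hyps[OF _ tP] by blast
    let ?r = "max (ratio m1) (ratio m2)"
    have lt: "length u' = length u + length t" "length v' = length v + length t'" using t(3) t'(3) lu by simp_all
    have "ratio a = (real (length v) + real (length t')) / (real (length u) + real (length t))"
      unfolding ratio_def a fst_conv snd_conv lt by simp
    also have "\<dots> \<le> ?r"
    proof (rule mediant)
      show "real (length u) > 0" using uX(4) by simp
      show "real (length t) > 0" using tne by simp
      have "real (length v) / real (length u) = ratio b" unfolding ratio_def bd by simp
      also have "\<dots> \<le> ?r" using m1(2) by linarith
      finally show "real (length v) / real (length u) \<le> ?r" .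
      have "real (length t') / real (length t) = ratio (t, t')" unfolding ratio_def by simp
      also have "\<dots> \<le> ?r" using m2(2) by linarith
      finally show "real (length t') / real (length t) \<le> ?r" .
    qed
    finally have "ratio a \<le> ?r" .
    then show ?thesis
    proof (cases "ratio m1 \<le> ratio m2")
      case True
      then have "ratio a \<le> ratio m2" using \<open>ratio a \<le> ?r\<close> by (simp add: max_def)
      then show ?thesis using m2(1) by blast
    next
      case False
      then have "ratio a \<le> ratio m1" using \<open>ratio a \<le> ?r\<close> by (simp add: max_def)
      then show ?thesis using m1(1) by blast
    qed
  qed
qed

end


lemma rho_eq:
  assumes "finite L" "L \<inter> {0<..} \<noteq> {}"
  shows "rho_set L = ereal (real (Max (L \<inter> {0<..})) / real (LEAST n. n \<in> L \<and> 0 < n))"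
proof -
  let ?S = "L \<inter> {0<..}"
  have fS: "finite ?S" using assms(1) by simp
  have sup: "(SUP n\<in>?S. ereal (real n)) = ereal (real (Max ?S))"
  proof (rule antisym)
    show "(SUP n\<in>?S. ereal (real n)) \<le> ereal (real (Max ?S))"
      by (rule SUP_least) (use fS in simp)
    show "ereal (real (Max ?S)) \<le> (SUP n\<in>?S. ereal (real n))"
      by (rule SUP_upper) (use fS assms(2) Max_in in blast)
  qed
  obtain n0 where "n0 \<in> L" "0 < n0" using assms(2) by auto
  then have "(LEAST n. n \<in> L \<and> 0 < n) \<in> L \<and> 0 < (LEAST n. n \<in> L \<and> 0 < n)"
    by (intro LeastI[of "\<lambda>n. n \<in> L \<and> 0 < n"]) auto
  then have "real (LEAST n. n \<in> L \<and> 0 < n) \<noteq> 0" by simp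
  then show ?thesis unfolding rho_set_def using assms(2) sup by simp
qed

lemma rho_le:
  assumes "finite L" "r \<ge> 0" "\<And>m n. m \<in> L \<Longrightarrow> n \<in> L \<Longrightarrow> 0 < m \<Longrightarrow> 0 < n \<Longrightarrow> real m / real n \<le> r"
  shows "rho_set L \<le> ereal r"
proof (cases "L \<inter> {0<..} = {}")
  case True then show ?thesis unfolding rho_set_def using assms(2) by simp
next
  case False
  let ?S = "L \<inter> {0<..}"
  have "Max ?S \<in> ?S" using assms(1) False by (intro Max_in) auto
  moreover obtain n0 where "n0 \<in> L" "0 < n0" using False by auto
  then have "(LEAST n. n \<in> L \<and> 0 < n) \<in> L \<and> 0 < (LEAST n. n \<in> L \<and> 0 < n)"
    by (intro LeastI[of "\<lambda>n. n \<in> L \<and> 0 < n"]) auto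
  ultimately have "real (Max ?S) / real (LEAST n. n \<in> L \<and> 0 < n) \<le> r" using assms(3) by auto
  then show ?thesis using rho_eq[OF assms(1) False] by simp
qed

lemma rho_ge:
  assumes "finite L" "m \<in> L" "n \<in> L" "0 < m" "0 < n"
  shows "ereal (real m / real n) \<le> rho_set L"
proof -
  let ?S = "L \<inter> {0<..}"
  have ne: "?S \<noteq> {}" using assms by auto
  have "m \<le> Max ?S" using assms by (intro Max_ge) auto
  moreover have "(LEAST n. n \<in> L \<and> 0 < n) \<le> n" using assms by (intro Least_le) auto
  moreover have "0 < (LEAST n. n \<in> L \<and> 0 < n)"
    using assms LeastI[of "\<lambda>n. n \<in> L \<and> 0 < n" n] by auto
  ultimately have "real m / real n \<le> real (Max ?S) / real (LEAST n. n \<in> L \<and> 0 < n)"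
    by (intro frac_le) auto
  then show ?thesis using rho_eq[OF assms(1) ne] by simp
qed

context PM begin

lemma main: "accepted_elasticity X R"
proof (cases "PS = {}")
  case True
  have z: "rho_set (length_set X R a) = 0" if "a \<in> lists X" for a
  proof -
    have "length_set X R a \<inter> {0<..} = {}"
    proof (rule ccontr)
      assume "length_set X R a \<inter> {0<..} \<noteq> {}"
      then obtain b where "b \<in> lists X" "eq b a" "0 < length b" unfolding length_set_def by auto
      then have "(b, b) \<in> PS" unfolding PS_def using erefl by auto
      then show False using True by simp
    qed
    then show ?thesis unfolding rho_set_def by simp
  qed
  have nil: "([] :: 'a list) \<in> lists X" by simp
  have "elasticity X R = (SUP a\<in>lists X. rho_set (length_set X R a))"
    unfolding elasticity_def length_sets_def by (simp add: image_comp)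
  also have "\<dots> = (SUP a\<in>lists X. (0::ereal))" using z by (intro SUP_cong) auto
  also have "\<dots> = 0" using nil by (subst SUP_const) auto
  finally have "elasticity X R = rho_set (length_set X R [])" using z[OF nil] by simp
  moreover have "length_set X R [] \<in> length_sets X R" unfolding length_sets_def using nil by blast
  ultimately show ?thesis unfolding accepted_elasticity_def using z[OF nil] by auto
next
  case False
  then obtain p0 where "p0 \<in> PS" by blast
  then obtain m0 where "m0 \<in> MN" using lemA by blast
  then have MNne: "MN \<noteq> {}" by blast
  define r where "r = Max (ratio ` MN)"
  have "r \<in> ratio ` MN" unfolding r_def using MN_finite MNne by (intro Max_in) auto
  then obtain q where q: "q \<in> MN" "ratio q = r" by auto
  have rmax: "ratio p \<le> r" if pP: "p \<in> PS" for p
  proof -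
    obtain m where "m \<in> MN" "ratio p \<le> ratio m" using lemA[OF pP] by blast
    moreover have "ratio m \<le> r" unfolding r_def using MN_finite \<open>m \<in> MN\<close> by (intro Max_ge) auto
    ultimately show ?thesis by linarith
  qed
  have r0: "r \<ge> 0" using q(2) unfolding ratio_def by (metis divide_nonneg_nonneg of_nat_0_le_iff)
  have finL: "finite (length_set X R a)" if "a \<in> lists X" for a using bf that unfolding BF_def by blast
  have le: "rho_set (length_set X R a) \<le> ereal r" if aX: "a \<in> lists X" for a
  proof (rule rho_le[OF finL[OF aX] r0])
    fix m n assume mn: "m \<in> length_set X R a" "n \<in> length_set X R a" "0 < m" "0 < n"
    obtain b1 where b1: "b1 \<in> lists X" "eq b1 a" "length b1 = m" using mn(1) unfolding length_set_def by auto
    obtain b2 where b2: "b2 \<in> lists X" "eq b2 a" "length b2 = n" using mn(2) unfolding length_set_def by auto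
    have "eq b2 b1" using etrans[OF b2(2) esym[OF b1(2)]] .
    moreover have "b2 \<noteq> []" using b2(3) mn(4) by auto
    ultimately have "(b2, b1) \<in> PS" unfolding PS_def using b1(1) b2(1) by simp
    then have "ratio (b2, b1) \<le> r" by (rule rmax)
    then show "real m / real n \<le> r" unfolding ratio_def using b1 b2 by simp
  qed
  obtain u v where qd: "q = (u, v)" by force
  have qP: "(u, v) \<in> PS" using q(1) qd unfolding MN_def by auto
  then have uv: "u \<in> lists X" "v \<in> lists X" "eq u v" "u \<noteq> []" unfolding PS_def by auto
  have "v \<noteq> []" using PS_snd_ne[OF qP] by simp
  have ge: "ereal r \<le> rho_set (length_set X R u)"
  proof -
    have "eq v u" using esym[OF uv(3)] .
    then have "length v \<in> length_set X R u" unfolding length_set_def using uv(2) by blast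
    moreover have "length u \<in> length_set X R u" unfolding length_set_def using uv(1) erefl[of u] by blast
    ultimately have "ereal (real (length v) / real (length u)) \<le> rho_set (length_set X R u)"
      using \<open>v \<noteq> []\<close> uv(4) by (intro rho_ge[OF finL[OF uv(1)]]) auto
    then show ?thesis using q(2) qd unfolding ratio_def by simp
  qed
  have eqr: "rho_set (length_set X R u) = ereal r" using le[OF uv(1)] ge by simp
  have "elasticity X R = (SUP a\<in>lists X. rho_set (length_set X R a))"
    unfolding elasticity_def length_sets_def by (simp add: image_comp)
  also have "\<dots> = ereal r"
  proof (rule antisym)
    show "(SUP a\<in>lists X. rho_set (length_set X R a)) \<le> ereal r" by (rule SUP_least) (rule le)
    show "ereal r \<le> (SUP a\<in>lists X. rho_set (length_set X R a))"
      using ge uv(1) by (intro SUP_upper2) auto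
  qed
  finally have "elasticity X R = rho_set (length_set X R u)" using eqr by simp
  moreover have "length_set X R u \<in> length_sets X R" unfolding length_sets_def using uv(1) by blast
  ultimately show ?thesis unfolding accepted_elasticity_def using eqr
    by (intro bexI[of _ "length_set X R u"]) simp_all
qed

end

theorem proposition5p4:
  fixes X :: "'a set" and R :: "('a list \<times> 'a list) set"
  assumes "finite X"
    and "R \<subseteq> lists X \<times> lists X"
    and "normalizing X R"
    and "cancellative X R"
    and "BF X R"
  shows "accepted_elasticity X R"
proof -
  interpret PM X R using assms by unfold_locales
  show ?thesis by (rule main)
qed


end
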